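(* For $s\geq 0$ let $(G_s,\varphi)$ be as in the context. Then: (i) $(G_s,\varphi)$ is a Laplacian soliton with constant $c_s=-\tfrac{15}{8}+8s^2$ and derivation $D_s=\tfrac1{32}\mathrm{Diag}(45-32s-64s^2,\,5-32s-64s^2,\,45+32s-64s^2,\,5+32s-64s^2,\,50-128s^2,\,90-128s^2,\,0)\in\mathrm{Der}(\mathfrak g_s)$ (diagonal in the basis $e_1,\dots,e_7$); consequently it is shrinking if $s\in[0,\tfrac{\sqrt{15}}8)$, steady if $s=\tfrac{\sqrt{15}}8$, and expanding if $s\in(\tfrac{\sqrt{15}}8,\infty)$. (ii) $(G_s,\langle\cdot,\cdot\rangle)$ is an expanding Ricci soliton if and only if $s=\tfrac58$. (iii) For all $a,s\in\mathbb R$, the Lie algebras $\mathfrak g_s$ and $\mathfrak s_a$ are not isomorphic.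
   Context: For $s\in\mathbb R$, $\mathfrak g_s$ is the real Lie algebra with basis $\{e_1,\dots,e_7\}$ whose only nonzero brackets of basis elements (up to antisymmetry) are $[e_1,e_3]=-e_6$, $[e_1,e_4]=-e_5$, $[e_2,e_3]=-e_5$, $[e_7,e_i]=(A_s)_{ii}e_i$ ($i=1,\dots,6$), with $A_s=\mathrm{Diag}(\tfrac38+s,-\tfrac18+s,\tfrac38-s,-\tfrac18-s,\tfrac14,\tfrac34)$; $G_s$ is the simply connected Lie group with Lie algebra $\mathfrak g_s$, with left-invariant $G_2$-structure $\varphi=e^{127}+e^{347}+e^{567}+e^{135}-e^{146}-e^{236}-e^{245}$ ($e^{ijk}=e^i\wedge e^j\wedge e^k$, $\{e^i\}$ dual basis). $\langle\cdot,\cdot\rangle$ is the left-invariant metric induced by $\varphi$, making $\{e_i\}$ orthonormal; $\Delta=dd^*+d^*d$ is the Hodge Laplacian of this metric (orientation $e^{1234567}$). For $a\in\mathbb R$, $\mathfrak s_a$ is the real Lie algebra with basis $\{e_1,\dots,e_7\}$ whose only nonzero brackets of basis elements (up to antisymmetry) are $[e_1,e_3]=-e_6$, $[e_1,e_4]=-e_5$, $[e_2,e_3]=-e_5$, $[e_2,e_4]=e_6$, $[e_7,e_i]=(A_a)_{ii}e_i$ ($i=1,\dots,6$), with $A_a=\tfrac14\mathrm{Diag}(1+4a,1+4a,1-4a,1-4a,2,2)$. For $D\in\mathrm{Der}(\mathfrak g)$ of the Lie algebra $\mathfrak g$ of a simply connected Lie group $G$, $X_D$ is the vector field $X_D(p)=\frac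 d{dt}|_{0}f_t(p)$, with $f_t\in\mathrm{Aut}(G)$ the automorphism satisfying $df_t|_e=e^{tD}$. A left-invariant $G_2$-structure $\varphi$ is a Laplacian soliton with constant $c\in\mathbb R$ and derivation $D$ if $\Delta\varphi=c\varphi+\mathcal L_{X_D}\varphi$ ($\mathcal L$ the Lie derivative); it is shrinking, steady or expanding if $c<0$, $c=0$ or $c>0$. A left-invariant metric $\langle\cdot,\cdot\rangle$ on $G$ is a Ricci soliton if its Ricci operator satisfies $\mathrm{Ric}=c\,\mathrm{id}+D$ for some $c\in\mathbb R$ and $D\in\mathrm{Der}(\mathfrak g)$; it is expanding if $c<0$. *)

theory Defs
  imports "HOL-Analysis.Analysis"
begin

text \<open>Left-invariant objects on a simply connected Lie group are identified with
multilinear algebra on its Lie algebra, with basis e_1,...,e_7 (indices 1..7).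
A (mixed) form is given by its components on basis vectors:
omega L = omega(e_{L!0}, ..., e_{L!(k-1)}) for a list L of length k.
A Lie algebra is given by structure constants c: [e_a,e_b] = sum_m c a b m e_m.
An endomorphism D is given by its matrix: D e_a = sum_m D m a e_m.\<close>

type_synonym form = "nat list \<Rightarrow> real"
type_synonym structconst = "nat \<Rightarrow> nat \<Rightarrow> nat \<Rightarrow> real"
type_synonym endo = "nat \<Rightarrow> nat \<Rightarrow> real"

definition idx :: "nat set" where "idx = {1..7}"

definition lists_of :: "nat \<Rightarrow> nat list set" where
  "lists_of m = {L. set L \<subseteq> idx \<and> length L = m}"

definition inv_count :: "nat list \<Rightarrow> nat" where
  "inv_count L = card {(i, j). i < j \<and> j < length L \<and> L ! i > L ! j}"

text \<open>The basic form e^{i_1...i_k} (determinant convention).\<close>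
definition elem_form :: "nat list \<Rightarrow> form" where
  "elem_form I L = (if distinct I \<and> mset L = mset I
                    then (-1) ^ (inv_count L + inv_count I) else 0)"

definition levi :: "nat list \<Rightarrow> real" where
  "levi L = elem_form [1,2,3,4,5,6,7] L"

definition delete2 :: "nat \<Rightarrow> nat \<Rightarrow> nat list \<Rightarrow> nat list" where
  "delete2 i j L = map (nth L) (filter (\<lambda>p. p \<noteq> i \<and> p \<noteq> j) [0..<length L])"

definition ext_d :: "structconst \<Rightarrow> form \<Rightarrow> form" where
  "ext_d c \<omega> L = (\<Sum>i<length L. \<Sum>j<length L.
      if i < j then (-1) ^ (i + j) * (\<Sum>m\<in>idx. c (L ! i) (L ! j) m * \<omega> (m # delete2 i j L))
      else 0)"

text \<open>Hodge star of the metric making e_1..e_7 orthonormal, orientation e^{1234567}.\<close>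
definition hodge :: "form \<Rightarrow> form" where
  "hodge \<omega> J = (\<Sum>I\<in>lists_of (7 - length J). levi (I @ J) * \<omega> I) / fact (7 - length J)"

text \<open>Codifferential: on k-forms in dimension 7, d* = (-1)^k * d *.\<close>
definition codiff :: "structconst \<Rightarrow> form \<Rightarrow> form" where
  "codiff c \<omega> L = (-1) ^ (length L + 1) * hodge (ext_d c (hodge \<omega>)) L"

definition hodge_laplacian :: "structconst \<Rightarrow> form \<Rightarrow> form" where
  "hodge_laplacian c \<omega> L = ext_d c (codiff c \<omega>) L + codiff c (ext_d c \<omega>) L"

text \<open>Lie derivative of a left-invariant form along X_D:
(L_{X_D} omega)(x_1,..,x_k) = sum_p omega(x_1,..,D x_p,..,x_k).\<close>
definition lie_deriv_der :: "endo \<Rightarrow> form \<Rightarrow> form" where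
  "lie_deriv_der D \<omega> L = (\<Sum>p<length L. \<Sum>m\<in>idx. D m (L ! p) * \<omega> (L[p := m]))"

definition is_derivation :: "structconst \<Rightarrow> endo \<Rightarrow> bool" where
  "is_derivation c D \<longleftrightarrow> (\<forall>a\<in>idx. \<forall>b\<in>idx. \<forall>n\<in>idx.
     (\<Sum>m\<in>idx. c a b m * D n m) = (\<Sum>m\<in>idx. D m a * c m b n) + (\<Sum>m\<in>idx. D m b * c a m n))"

definition laplacian_soliton :: "structconst \<Rightarrow> form \<Rightarrow> real \<Rightarrow> endo \<Rightarrow> bool" where
  "laplacian_soliton c \<omega> lam D \<longleftrightarrow> is_derivation c D \<and>
     (\<forall>L\<in>lists_of 3. hodge_laplacian c \<omega> L = lam * \<omega> L + lie_deriv_der D \<omega> L)"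

text \<open>Levi-Civita connection of the left-invariant metric (Koszul formula):
Gamma a b m = < nabla_{e_a} e_b, e_m >.\<close>
definition lc_conn :: "structconst \<Rightarrow> nat \<Rightarrow> nat \<Rightarrow> nat \<Rightarrow> real" where
  "lc_conn c a b m = (c a b m - c b m a + c m a b) / 2"

text \<open>Curvature R(e_a,e_b)e_k = nabla_a nabla_b e_k - nabla_b nabla_a e_k - nabla_{[e_a,e_b]} e_k,
component along e_n.\<close>
definition riem :: "structconst \<Rightarrow> nat \<Rightarrow> nat \<Rightarrow> nat \<Rightarrow> nat \<Rightarrow> real" where
  "riem c a b k n = (\<Sum>m\<in>idx. lc_conn c b k m * lc_conn c a m n
                             - lc_conn c a k m * lc_conn c b m n
                             - c a b m * lc_conn c m k n)"

text \<open>Ricci tensor ric(e_b,e_k) = tr (x \<mapsto> R(x,e_b)e_k); since the basis is orthonormal,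
the Ricci operator has matrix entry (k,b) equal to ric c b k.\<close>
definition ric :: "structconst \<Rightarrow> nat \<Rightarrow> nat \<Rightarrow> real" where
  "ric c b k = (\<Sum>a\<in>idx. riem c a b k a)"

definition ricci_soliton :: "structconst \<Rightarrow> real \<Rightarrow> endo \<Rightarrow> bool" where
  "ricci_soliton c lam D \<longleftrightarrow> is_derivation c D \<and>
     (\<forall>b\<in>idx. \<forall>k\<in>idx. ric c b k = lam * (if b = k then 1 else 0) + D k b)"

definition expanding_ricci_soliton :: "structconst \<Rightarrow> bool" where
  "expanding_ricci_soliton c \<longleftrightarrow> (\<exists>lam D. lam < 0 \<and> ricci_soliton c lam D)"

definition lie_iso :: "structconst \<Rightarrow> structconst \<Rightarrow> endo \<Rightarrow> bool" where
  "lie_iso c1 c2 T \<longleftrightarrow>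
     (\<exists>S. \<forall>a\<in>idx. \<forall>b\<in>idx. (\<Sum>m\<in>idx. S a m * T m b) = (if a = b then 1 else 0)
                        \<and> (\<Sum>m\<in>idx. T a m * S m b) = (if a = b then 1 else 0)) \<and>
     (\<forall>a\<in>idx. \<forall>b\<in>idx. \<forall>n\<in>idx.
        (\<Sum>m\<in>idx. c1 a b m * T n m) = (\<Sum>p\<in>idx. \<Sum>q\<in>idx. T p a * T q b * c2 p q n))"

definition lie_isomorphic :: "structconst \<Rightarrow> structconst \<Rightarrow> bool" where
  "lie_isomorphic c1 c2 \<longleftrightarrow> (\<exists>T. lie_iso c1 c2 T)"

definition A_g :: "real \<Rightarrow> nat \<Rightarrow> real" where
  "A_g s i = (if i = 1 then 3/8 + s else if i = 2 then -1/8 + s else if i = 3 then 3/8 - s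
              else if i = 4 then -1/8 - s else if i = 5 then 1/4 else 3/4)"

definition ub_g :: "real \<Rightarrow> structconst" where
  "ub_g s a b m = (if (a, b, m) = (1, 3, 6) then -1 else 0) + (if (a, b, m) = (1, 4, 5) then -1 else 0)
     + (if (a, b, m) = (2, 3, 5) then -1 else 0)
     + (if a = 7 \<and> 1 \<le> b \<and> b \<le> 6 \<and> m = b then A_g s b else 0)"

definition g_sc :: "real \<Rightarrow> structconst" where
  "g_sc s a b m = ub_g s a b m - ub_g s b a m"

definition A_s :: "real \<Rightarrow> nat \<Rightarrow> real" where
  "A_s a i = (if i \<in> {1, 2} then (1 + 4 * a) / 4 else if i \<in> {3, 4} then (1 - 4 * a) / 4
              else 2 / 4)"

definition ub_s :: "real \<Rightarrow> structconst" where
  "ub_s x a b m = (if (a, b, m) = (1, 3, 6) then -1 else 0) + (if (a, b, m) = (1, 4, 5) then -1 else 0)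
     + (if (a, b, m) = (2, 3, 5) then -1 else 0) + (if (a, b, m) = (2, 4, 6) then 1 else 0)
     + (if a = 7 \<and> 1 \<le> b \<and> b \<le> 6 \<and> m = b then A_s x b else 0)"

definition s_sc :: "real \<Rightarrow> structconst" where
  "s_sc x a b m = ub_s x a b m - ub_s x b a m"

definition phi :: form where
  "phi L = elem_form [1,2,7] L + elem_form [3,4,7] L + elem_form [5,6,7] L + elem_form [1,3,5] L
         - elem_form [1,4,6] L - elem_form [2,3,6] L - elem_form [2,4,5] L"

definition D_s :: "real \<Rightarrow> endo" where
  "D_s s m k = (if m = k then
      (if k = 1 then 45 - 32* s - 64* s ^ 2 else if k = 2 then 5 - 32* s - 64* s ^ 2
       else if k = 3 then 45 + 32* s - 64* s ^ 2 else if k = 4 then 5 + 32* s - 64* s ^ 2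
       else if k = 5 then 50 - 128* s ^ 2 else if k = 6 then 90 - 128* s ^ 2 else 0) / 32
     else 0)"

definition c_s :: "real \<Rightarrow> real" where
  "c_s s = -15/8 + 8 * s^2"

end

theory Submission
  imports Defs "HOL-Combinatorics.Multiset_Permutations"
begin

definition swapadj :: "nat \<Rightarrow> nat list \<Rightarrow> nat list" where
  "swapadj p L = L[p := L ! Suc p, Suc p := L ! p]"

definition AA :: "form \<Rightarrow> bool" where
  "AA \<omega> \<longleftrightarrow> (\<forall>L p. Suc p < length L \<longrightarrow> \<omega> (swapadj p L) = - \<omega> L)"

definition alt_form :: "form \<Rightarrow> bool" where
  "alt_form \<omega> \<longleftrightarrow> (\<forall>L. \<omega> L = (if distinct L then (-1) ^ inv_count L * \<omega> (sort L) else 0))"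

lemma inv_count_Nil[simp]: "inv_count [] = 0"
  by (simp add: inv_count_def)

lemma inv_count_Cons[simp]:
  "inv_count (x # xs) = length (filter (\<lambda>y. y < x) xs) + inv_count xs"
proof -
  let ?A = "{(i, j). i < j \<and> j < length (x#xs) \<and> (x#xs) ! i > (x#xs) ! j}"
  let ?B = "{(i, j). i < j \<and> j < length xs \<and> xs ! i > xs ! j}"
  let ?C = "{j. j < length xs \<and> xs ! j < x}"
  have eq: "?A = (\<lambda>j. (0, Suc j)) ` ?C \<union> (\<lambda>(i,j). (Suc i, Suc j)) ` ?B"
  proof (rule set_eqI, clarify)
    fix a b
    show "((a, b) \<in> ?A) = ((a, b) \<in> (\<lambda>j. (0, Suc j)) ` ?C \<union> (\<lambda>(i,j). (Suc i, Suc j)) ` ?B)"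
      by (cases a; cases b) (auto simp: image_iff)
  qed
  have fB: "finite ?B" by (rule finite_subset[of _ "{..<length xs} \<times> {..<length xs}"]) auto
  have fC: "finite ?C" by auto
  have "card ?A = card ((\<lambda>j. (0::nat, Suc j)) ` ?C) + card ((\<lambda>(i,j). (Suc i, Suc j)) ` ?B)"
    unfolding eq by (rule card_Un_disjoint) (use fB fC in auto)
  also have "\<dots> = card ?C + card ?B"
    by (subst card_image, simp add: inj_on_def)+ (auto simp: inj_on_def)
  finally show ?thesis
    by (simp add: inv_count_def length_filter_conv_card)
qed

lemma length_swapadj[simp]: "length (swapadj p L) = length L"
  by (simp add: swapadj_def)

lemma mset_swapadj[simp]: "Suc p < length L \<Longrightarrow> mset (swapadj p L) = mset L"
  unfolding swapadj_def by (rule mset_swap) auto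

lemma swapadj_Cons0[simp]: "swapadj 0 (x # y # M) = y # x # M"
  by (simp add: swapadj_def)

lemma swapadj_ConsSuc[simp]: "swapadj (Suc p) (x # L) = x # swapadj p L"
  by (simp add: swapadj_def)

lemma swapadj_append_left: "swapadj (length R + p) (R @ L) = R @ swapadj p L"
  by (induct R) (auto simp: swapadj_def)

lemma swapadj_append_right: "Suc p < length R \<Longrightarrow> swapadj p (R @ L) = swapadj p R @ L"
  by (auto simp: swapadj_def nth_append list_update_append)

lemma swapadj_swapadj: "Suc p < length L \<Longrightarrow> swapadj p (swapadj p L) = L"
  by (auto simp: swapadj_def nth_list_update list_update_swap intro!: nth_equalityI)

lemma length_filter_mset_eq:
  "mset xs = mset ys \<Longrightarrow> length (filter P xs) = length (filter P ys)"
  by (metis mset_filter size_mset)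

lemma inv_count_swapadj:
  "Suc p < length L \<Longrightarrow>
   inv_count (swapadj p L) + (if L ! Suc p < L ! p then 1 else 0)
   = inv_count L + (if L ! p < L ! Suc p then 1 else 0)"
proof (induct p arbitrary: L)
  case 0
  then obtain x y M where L: "L = x # y # M"
    by (metis Suc_length_conv length_0_conv less_Suc_eq_0_disj less_imp_Suc_add list.exhaust)
  show ?case unfolding L by auto
next
  case (Suc p)
  then obtain x L' where L: "L = x # L'" by (cases L) auto
  with Suc have "Suc p < length L'" by simp
  note IH = Suc(1)[OF this]
  have "length (filter (\<lambda>y. y < x) (swapadj p L')) = length (filter (\<lambda>y. y < x) L')"
    by (rule length_filter_mset_eq) (simp add: \<open>Suc p < length L'\<close>)
  then show ?case unfolding L using IH by simp
qed

lemma sorted_inv_count: "sorted L \<Longrightarrow> inv_count L = 0"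
  by (induct L) (auto simp: filter_empty_conv)

lemma sort_mset_eq: "mset xs = mset ys \<Longrightarrow> sort xs = sort ys"
  by (metis properties_for_sort mset_sort sorted_sort)

lemma AA_sort:
  assumes "AA \<omega>"
  shows "\<omega> L = (-1) ^ inv_count L * \<omega> (sort L)"
proof (induct "inv_count L" arbitrary: L rule: less_induct)
  case less
  show ?case
  proof (cases "sorted L")
    case True
    then show ?thesis by (simp add: sorted_inv_count sorted_sort_id)
  next
    case False
    then obtain p where p: "Suc p < length L" "L ! Suc p < L ! p"
      by (auto simp: sorted_iff_nth_Suc not_le)
    define L' where "L' = swapadj p L"
    have inv: "inv_count L' + 1 = inv_count L"
      using inv_count_swapadj[OF p(1)] p(2) unfolding L'_def by auto
    have IH: "\<omega> L' = (-1) ^ inv_count L' * \<omega> (sort L')"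
      using less inv by auto
    have s: "sort L' = sort L" unfolding L'_def by (rule sort_mset_eq) (simp add: p(1))
    have "\<omega> L = - \<omega> L'"
      using assms p(1) unfolding AA_def L'_def by (metis length_swapadj swapadj_swapadj)
    then show ?thesis using IH s inv[symmetric] by simp
  qed
qed

lemma swapadj_eq_id: "xs ! p = xs ! Suc p \<Longrightarrow> swapadj p xs = xs"
  unfolding swapadj_def by (metis list_update_id)

lemma AA_nondistinct:
  assumes "AA \<omega>" "\<not> distinct L"
  shows "\<omega> L = 0"
proof -
  have "\<not> sorted_wrt (<) (sort L)" using assms(2) by (simp add: strict_sorted_iff)
  then obtain p where p: "Suc p < length (sort L)" "\<not> sort L ! p < sort L ! Suc p"
    by (auto simp: sorted_wrt_iff_nth_Suc_transp)
  moreover have "sort L ! p \<le> sort L ! Suc p"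
    using p(1) by (intro sorted_nth_mono[OF sorted_sort]) auto
  ultimately have eq: "sort L ! p = sort L ! Suc p" by simp
  have "swapadj p (sort L) = sort L" using eq by (rule swapadj_eq_id)
  moreover have "\<omega> (swapadj p (sort L)) = - \<omega> (sort L)" using assms(1) p(1) unfolding AA_def by blast
  ultimately have "\<omega> (sort L) = - \<omega> (sort L)" by simp
  then have "\<omega> (sort L) = 0" by simp
  then show ?thesis by (subst AA_sort[OF assms(1), of L]) simp
qed

lemma AA_alt: "AA \<omega> \<Longrightarrow> alt_form \<omega>"
  unfolding alt_form_def by (metis AA_sort AA_nondistinct)

lemma AA_elem_form: "AA (elem_form I)"
  unfolding AA_def
proof (intro allI impI)
  fix L :: "nat list" and p assume p: "Suc p < length L"
  have ms: "mset (swapadj p L) = mset L" using p by simp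
  show "elem_form I (swapadj p L) = - elem_form I L"
  proof (cases "distinct I \<and> mset L = mset I")
    case True
    then have "distinct L" by (metis mset_eq_imp_distinct_iff)
    then have "L ! p \<noteq> L ! Suc p" using p by (simp add: nth_eq_iff_index_eq)
    then have "inv_count (swapadj p L) = Suc (inv_count L) \<or> inv_count L = Suc (inv_count (swapadj p L))"
      using inv_count_swapadj[OF p] by (auto split: if_splits)
    then have "(-1::real) ^ (inv_count (swapadj p L) + inv_count I) = - ((-1) ^ (inv_count L + inv_count I))"
      by auto
    then show ?thesis using True ms by (simp add: elem_form_def)
  next
    case False
    then show ?thesis using ms by (auto simp: elem_form_def)
  qed
qed

lemma AA_levi: "AA levi"
  using AA_elem_form unfolding levi_def[abs_def] by simp

lemma AA_hodge: "AA (hodge \<omega>)"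
  unfolding AA_def
proof (intro allI impI)
  fix J :: "nat list" and p assume p: "Suc p < length J"
  have "levi (I @ swapadj p J) = - levi (I @ J)" for I
  proof -
    have "I @ swapadj p J = swapadj (length I + p) (I @ J)" by (simp add: swapadj_append_left)
    then show ?thesis using AA_levi p unfolding AA_def by simp
  qed
  then show "hodge \<omega> (swapadj p J) = - hodge \<omega> J"
    unfolding hodge_def by (simp add: sum_negf)
qed

lemma AA_zero: "AA (\<lambda>L. 0)" by (simp add: AA_def)

lemma AA_add: "AA f \<Longrightarrow> AA g \<Longrightarrow> AA (\<lambda>L. f L + g L)"
  by (simp add: AA_def)

lemma AA_diff: "AA f \<Longrightarrow> AA g \<Longrightarrow> AA (\<lambda>L. f L - g L)"
  by (simp add: AA_def)

lemma AA_scale: "AA f \<Longrightarrow> AA (\<lambda>L. a * f L)"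
  by (simp add: AA_def)

lemma AA_phi: "AA phi"
  unfolding phi_def[abs_def]
  by (intro AA_add AA_diff AA_elem_form)

definition Ff :: "structconst \<Rightarrow> form \<Rightarrow> nat \<Rightarrow> nat \<Rightarrow> nat list \<Rightarrow> real" where
  "Ff c \<omega> x y R = (\<Sum>m\<in>idx. c x y m * \<omega> (m # R))"

fun Hr :: "structconst \<Rightarrow> form \<Rightarrow> nat list \<Rightarrow> nat \<Rightarrow> nat list \<Rightarrow> real" where
  "Hr c \<omega> R x [] = 0"
| "Hr c \<omega> R x (y # M) = Ff c \<omega> x y (R @ M) - Hr c \<omega> (R @ [y]) x M"

fun Gr :: "structconst \<Rightarrow> form \<Rightarrow> nat list \<Rightarrow> nat list \<Rightarrow> real" where
  "Gr c \<omega> R [] = 0"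
| "Gr c \<omega> R (x # L) = - Hr c \<omega> R x L + Gr c \<omega> (R @ [x]) L"

definition del1 :: "nat \<Rightarrow> nat list \<Rightarrow> nat list" where
  "del1 j L = map (nth L) (filter (\<lambda>p. p \<noteq> j) [0..<length L])"

lemma map_nth_filter_Cons:
  "map (nth (x # L)) (filter P [0..<Suc (length L)])
   = (if P 0 then [x] else []) @ map (nth L) (filter (\<lambda>p. P (Suc p)) [0..<length L])"
proof -
  have "[0..<Suc (length L)] = 0 # map Suc [0..<length L]"
    using upt_conv_Cons[of 0 "Suc (length L)"] map_Suc_upt[of 0 "length L"] by (simp del: upt_Suc)
  then show ?thesis by (simp add: filter_map comp_def)
qed

lemma delete2_0_Suc: "delete2 0 (Suc j) (x # L) = del1 j L"
  unfolding delete2_def del1_def using map_nth_filter_Cons[of x L "\<lambda>p. p \<noteq> 0 \<and> p \<noteq> Suc j"]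
  by simp

lemma delete2_Suc_Suc: "delete2 (Suc i) (Suc j) (x # L) = x # delete2 i j L"
  unfolding delete2_def using map_nth_filter_Cons[of x L "\<lambda>p. p \<noteq> Suc i \<and> p \<noteq> Suc j"]
  by simp

lemma del1_0: "del1 0 (y # M) = M"
  unfolding del1_def using map_nth_filter_Cons[of y M "\<lambda>p. p \<noteq> 0"]
  by (simp add: map_nth)

lemma del1_Suc: "del1 (Suc j) (y # M) = y # del1 j M"
  unfolding del1_def using map_nth_filter_Cons[of y M "\<lambda>p. p \<noteq> Suc j"]
  by simp

lemma Hr_sum: "Hr c \<omega> R x L = (\<Sum>j<length L. (-1) ^ j * Ff c \<omega> x (L ! j) (R @ del1 j L))"
proof (induct L arbitrary: R)
  case Nil then show ?case by simp
next
  case (Cons y M)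
  show ?case
    by (simp add: sum.lessThan_Suc_shift Cons del1_0 del1_Suc sum_negf del: sum.lessThan_Suc)
qed

lemma Gr_sum: "Gr c \<omega> R L = (\<Sum>i<length L. \<Sum>j<length L.
      if i < j then (-1) ^ (i + j) * Ff c \<omega> (L ! i) (L ! j) (R @ delete2 i j L) else 0)"
proof (induct L arbitrary: R)
  case Nil then show ?case by simp
next
  case (Cons x L)
  have A: "(\<Sum>j<Suc (length L). if 0 < j then (-1) ^ j * Ff c \<omega> ((x # L) ! 0) ((x # L) ! j) (R @ delete2 0 j (x # L)) else 0)
        = - Hr c \<omega> R x L"
    by (simp add: sum.lessThan_Suc_shift Hr_sum delete2_0_Suc sum_negf del: sum.lessThan_Suc)
  have B: "(\<Sum>i<length L. \<Sum>j<Suc (length L). if Suc i < j then (-1) ^ (Suc i + j) * Ff c \<omega> ((x # L) ! Suc i) ((x # L) ! j) (R @ delete2 (Suc i) j (x # L)) else 0)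
        = Gr c \<omega> (R @ [x]) L"
    by (simp add: sum.lessThan_Suc_shift Cons delete2_Suc_Suc del: sum.lessThan_Suc cong: if_cong)
  show ?case
    apply (simp only: length_Cons sum.lessThan_Suc_shift[of "\<lambda>i. \<Sum>j<Suc (length L). _ i j"])
    using A B by (simp del: sum.lessThan_Suc)
qed

lemma ext_d_Gr: "ext_d c \<omega> L = Gr c \<omega> [] L"
  by (simp add: ext_d_def Gr_sum Ff_def cong: if_cong)

definition antisym_c :: "structconst \<Rightarrow> bool" where
  "antisym_c c \<longleftrightarrow> (\<forall>a b m. c a b m = - c b a m)"

context
  fixes c :: structconst and \<omega> :: form
  assumes AAw: "AA \<omega>" and ac: "antisym_c c"
begin

lemma Ff_swapR: "Suc q < length R \<Longrightarrow> Ff c \<omega> x y (swapadj q R) = - Ff c \<omega> x y R"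
proof -
  assume q: "Suc q < length R"
  have "\<omega> (m # swapadj q R) = - \<omega> (m # R)" for m
  proof -
    have "\<omega> (swapadj (Suc q) (m # R)) = - \<omega> (m # R)"
      using AAw q unfolding AA_def by (metis Suc_less_eq length_Cons)
    then show ?thesis by simp
  qed
  then show ?thesis unfolding Ff_def by (simp add: sum_negf)
qed

lemma Ff_anti: "Ff c \<omega> y x R = - Ff c \<omega> x y R"
proof -
  have e: "c y x m = - c x y m" for m using ac unfolding antisym_c_def by blast
  show ?thesis unfolding Ff_def by (simp add: e sum_negf)
qed

lemma Hr_swapR: "Suc q < length R \<Longrightarrow> Hr c \<omega> (swapadj q R) x L = - Hr c \<omega> R x L"
proof (induct L arbitrary: R)
  case Nil then show ?case by simp
next
  case (Cons y M)
  have "swapadj q R @ M = swapadj q (R @ M)" using Cons(2) by (simp add: swapadj_append_right)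
  moreover have "swapadj q R @ [y] = swapadj q (R @ [y])" using Cons(2) by (simp add: swapadj_append_right)
  moreover have "Ff c \<omega> x y (swapadj q (R @ M)) = - Ff c \<omega> x y (R @ M)"
    using Cons(2) by (intro Ff_swapR) simp
  moreover have "Hr c \<omega> (swapadj q (R @ [y])) x M = - Hr c \<omega> (R @ [y]) x M"
    using Cons by simp
  ultimately show ?case by simp
qed

lemma Gr_swapR: "Suc q < length R \<Longrightarrow> Gr c \<omega> (swapadj q R) L = - Gr c \<omega> R L"
proof (induct L arbitrary: R)
  case Nil then show ?case by simp
next
  case (Cons x L)
  have "swapadj q R @ [x] = swapadj q (R @ [x])" using Cons(2) by (simp add: swapadj_append_right)
  moreover have "Gr c \<omega> (swapadj q (R @ [x])) L = - Gr c \<omega> (R @ [x]) L"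
    using Cons by simp
  ultimately show ?case using Hr_swapR[OF Cons(2)] by simp
qed

lemma swapadj_end: "swapadj (length R) (R @ [y, z]) = R @ [z, y]"
  using swapadj_append_left[of R 0 "[y, z]"] by simp

lemma Hr_swapL: "Suc p < length L \<Longrightarrow> Hr c \<omega> R x (swapadj p L) = - Hr c \<omega> R x L"
proof (induct L arbitrary: R p)
  case Nil then show ?case by simp
next
  case (Cons y L')
  show ?case
  proof (cases p)
    case 0
    with Cons(2) obtain z M where L': "L' = z # M" by (cases L') auto
    have "Hr c \<omega> (R @ [z, y]) x M = - Hr c \<omega> (R @ [y, z]) x M"
      using Hr_swapR[of "length R" "R @ [y, z]" x M] by (simp add: swapadj_end)
    then show ?thesis unfolding 0 L' by simp
  next
    case (Suc p')
    with Cons(2) have p': "Suc p' < length L'" by simp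
    have "R @ swapadj p' L' = swapadj (length R + p') (R @ L')" by (simp add: swapadj_append_left)
    then have "Ff c \<omega> x y (R @ swapadj p' L') = - Ff c \<omega> x y (R @ L')"
      using Ff_swapR[of "length R + p'" "R @ L'"] p' by simp
    then show ?thesis unfolding Suc using Cons(1)[OF p'] by simp
  qed
qed

lemma Gr_swapL: "Suc p < length L \<Longrightarrow> Gr c \<omega> R (swapadj p L) = - Gr c \<omega> R L"
proof (induct L arbitrary: R p)
  case Nil then show ?case by simp
next
  case (Cons x L')
  show ?case
  proof (cases p)
    case 0
    with Cons(2) obtain y M where L': "L' = y # M" by (cases L') auto
    have "Gr c \<omega> (R @ [y, x]) M = - Gr c \<omega> (R @ [x, y]) M"
      using Gr_swapR[of "length R" "R @ [x, y]" M] by (simp add: swapadj_end)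
    then show ?thesis unfolding 0 L' using Ff_anti[of x y "R @ M"] by simp
  next
    case (Suc p')
    with Cons(2) have p': "Suc p' < length L'" by simp
    show ?thesis unfolding Suc using Cons(1)[OF p'] Hr_swapL[OF p'] by simp
  qed
qed

lemma AA_ext_d: "AA (ext_d c \<omega>)"
  unfolding AA_def ext_d_Gr using Gr_swapL by simp

end

lemma idx_eq: "idx = set [1,2,3,4,5,6,7::nat]"
  unfolding idx_def by auto

lemma levi_nz: "levi L \<noteq> 0 \<Longrightarrow> distinct L \<and> set L = idx"
  unfolding levi_def elem_form_def idx_eq
  by (metis mset_eq_imp_distinct_iff mset_eq_setD)

lemma finite_lists_of: "finite (lists_of k)"
  unfolding lists_of_def idx_def by (rule finite_lists_length_eq) simp

lemma AA_append_right: "AA f \<Longrightarrow> AA (\<lambda>I. f (I @ J))"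
  unfolding AA_def
proof (intro allI impI)
  fix L :: "nat list" and p
  assume f: "\<forall>L p. Suc p < length L \<longrightarrow> f (swapadj p L) = - f L" and p: "Suc p < length L"
  then have "f (swapadj p (L @ J)) = - f (L @ J)" by simp
  then show "f (swapadj p L @ J) = - f (L @ J)" using p by (simp add: swapadj_append_right)
qed

lemma hodge_reduce:
  assumes alt: "alt_form \<omega>" and dJ: "distinct J" and sJ: "set J \<subseteq> idx"
  shows "hodge \<omega> J = levi (filter (\<lambda>x. x \<notin> set J) [1..<8] @ J) * \<omega> (filter (\<lambda>x. x \<notin> set J) [1..<8])"
proof -
  define I0 where "I0 = filter (\<lambda>x. x \<notin> set J) [1..<8]"
  define k where "k = 7 - length J"
  define P where "P = permutations_of_set (idx - set J)"
  define v where "v = levi (I0 @ J) * \<omega> I0"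
  have sI0: "set I0 = idx - set J" unfolding I0_def idx_def by auto
  have I0s: "sorted I0" "distinct I0" unfolding I0_def by (auto intro: sorted_wrt_filter)
  have cardJ: "card (set J) = length J" using dJ by (simp add: distinct_card)
  have cardD: "card (idx - set J) = k"
    unfolding k_def using sJ cardJ by (simp add: card_Diff_subset idx_def)
  have levI: "levi (I @ J) = (-1) ^ inv_count I * levi (sort I @ J)" for I
    using AA_sort[OF AA_append_right[OF AA_levi, of J], of I] by simp
  have trm: "levi (I @ J) * \<omega> I = (if I \<in> P then v else 0)" for I
  proof (cases "distinct I")
    case True
    have wI: "\<omega> I = (-1) ^ inv_count I * \<omega> (sort I)"
      using alt True unfolding alt_form_def by metis
    have prd: "levi (I @ J) * \<omega> I = levi (sort I @ J) * \<omega> (sort I)"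
    proof -
      have "(-1::real) ^ inv_count I * (-1) ^ inv_count I = 1"
        by (simp add: power_mult_distrib[symmetric])
      then show ?thesis unfolding wI levI[of I] by (metis (no_types, lifting) mult.assoc mult.left_commute mult_1)
    qed
    show ?thesis
    proof (cases "I \<in> P")
      case True
      then have "set I = idx - set J" unfolding P_def permutations_of_set_def by simp
      then have "sort I = I0"
        using I0s sI0 by (intro sorted_distinct_set_unique) (auto simp: \<open>distinct I\<close>)
      then show ?thesis using prd True unfolding v_def by simp
    next
      case False
      have "levi (sort I @ J) = 0"
      proof (rule ccontr)
        assume "levi (sort I @ J) \<noteq> 0"
        from levi_nz[OF this] have "distinct (sort I @ J)" "set (sort I @ J) = idx" by auto
        then have "set I = idx - set J" by auto
        then show False using False \<open>distinct I\<close> unfolding P_def permutations_of_set_def by simp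
      qed
      then show ?thesis using prd False by simp
    qed
  next
    case False
    then have "\<omega> I = 0" using alt unfolding alt_form_def by metis
    moreover have "I \<notin> P" using False unfolding P_def permutations_of_set_def by simp
    ultimately show ?thesis by simp
  qed
  have PL: "P \<subseteq> lists_of k"
    unfolding P_def lists_of_def permutations_of_set_def
    using cardD by (auto simp: distinct_card[symmetric])
  have fP: "finite P" unfolding P_def by simp
  have "(\<Sum>I\<in>lists_of k. levi (I @ J) * \<omega> I) = (\<Sum>I\<in>lists_of k. if I \<in> P then v else 0)"
    using trm by simp
  also have "\<dots> = (\<Sum>I\<in>lists_of k \<inter> P. v)"
    by (rule sum.inter_restrict[symmetric]) (rule finite_lists_of)
  also have "lists_of k \<inter> P = P" using PL by auto
  also have "(\<Sum>I\<in>P. v) = fact k * v"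
    unfolding P_def using cardD by (simp add: idx_def)
  finally show ?thesis
    unfolding hodge_def k_def[symmetric] v_def I0_def by simp
qed

lemma alt_eq:
  assumes "alt_form \<omega>" "alt_form \<tau>"
    and "\<And>L. sorted L \<Longrightarrow> distinct L \<Longrightarrow> set L \<subseteq> idx \<Longrightarrow> length L = k \<Longrightarrow> \<omega> L = \<tau> L"
    and "set L \<subseteq> idx" "length L = k"
  shows "\<omega> L = \<tau> L"
proof -
  have a: "\<omega> L = (if distinct L then (-1) ^ inv_count L * \<omega> (sort L) else 0)"
    using assms(1) unfolding alt_form_def by metis
  have b: "\<tau> L = (if distinct L then (-1) ^ inv_count L * \<tau> (sort L) else 0)"
    using assms(2) unfolding alt_form_def by metis
  show ?thesis
  proof (cases "distinct L")
    case True
    have "\<omega> (sort L) = \<tau> (sort L)"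
      using assms(3)[of "sort L"] assms(4,5) True by simp
    then show ?thesis using a b by simp
  qed (use a b in simp)
qed

fun ssl :: "nat \<Rightarrow> nat \<Rightarrow> nat list list" where
  "ssl lo 0 = [[]]"
| "ssl lo (Suc k) = concat (map (\<lambda>x. map ((#) x) (ssl (Suc x) k)) [lo..<8])"

lemma ssl_complete:
  "sorted_wrt (<) L \<Longrightarrow> set L \<subseteq> {lo..<8} \<Longrightarrow> length L = k \<Longrightarrow> L \<in> set (ssl lo k)"
proof (induct k arbitrary: lo L)
  case 0 then show ?case by simp
next
  case (Suc k)
  from Suc(4) obtain x L' where L: "L = x # L'" by (cases L) auto
  have "L' \<in> set (ssl (Suc x) k)"
    using Suc(2-4) unfolding L by (intro Suc(1)) (auto simp: Suc_le_eq)
  moreover have "x \<in> set [lo..<8]" using Suc(3) unfolding L by auto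
  ultimately show ?case unfolding L by auto
qed

lemma sorted_enum:
  "sorted L \<Longrightarrow> distinct L \<Longrightarrow> set L \<subseteq> idx \<Longrightarrow> length L = k \<Longrightarrow> L \<in> set (ssl 1 k)"
  by (rule ssl_complete) (auto simp: strict_sorted_iff idx_def)

lemma Hr_cong:
  assumes "\<And>X. set X \<subseteq> idx \<Longrightarrow> length X = length R + length L \<Longrightarrow> \<omega> X = \<omega>' X"
    and "set R \<subseteq> idx" "set L \<subseteq> idx"
  shows "Hr c \<omega> R x L = Hr c \<omega>' R x L"
  using assms
proof (induct L arbitrary: R)
  case Nil then show ?case by simp
next
  case (Cons y M)
  have "Ff c \<omega> x y (R @ M) = Ff c \<omega>' x y (R @ M)"
    unfolding Ff_def using Cons(2-4) by (intro sum.cong refl arg_cong2[where f="(*)"]) auto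
  moreover have "Hr c \<omega> (R @ [y]) x M = Hr c \<omega>' (R @ [y]) x M"
    using Cons(2-4) by (intro Cons(1)) auto
  ultimately show ?case by simp
qed

lemma Gr_cong:
  assumes "\<And>X. set X \<subseteq> idx \<Longrightarrow> length X = length R + length L - 1 \<Longrightarrow> \<omega> X = \<omega>' X"
    and "set R \<subseteq> idx" "set L \<subseteq> idx"
  shows "Gr c \<omega> R L = Gr c \<omega>' R L"
  using assms
proof (induct L arbitrary: R)
  case Nil then show ?case by simp
next
  case (Cons x L)
  have "Hr c \<omega> R x L = Hr c \<omega>' R x L"
    using Cons(2-4) by (intro Hr_cong) auto
  moreover have "Gr c \<omega> (R @ [x]) L = Gr c \<omega>' (R @ [x]) L"
    using Cons(2-4) by (intro Cons(1)) auto
  ultimately show ?case by simp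
qed

lemma ext_d_cong:
  assumes "\<And>X. set X \<subseteq> idx \<Longrightarrow> length X = length L - 1 \<Longrightarrow> \<omega> X = \<omega>' X"
    and "set L \<subseteq> idx"
  shows "ext_d c \<omega> L = ext_d c \<omega>' L"
  unfolding ext_d_Gr using assms by (intro Gr_cong) auto

lemma ext_d_zero: "ext_d c (\<lambda>X. 0) L = 0"
  unfolding ext_d_def by (simp cong: if_cong)

lemma hodge_zero:
  assumes "\<And>X. X \<in> lists_of (7 - length J) \<Longrightarrow> \<omega> X = 0"
  shows "hodge \<omega> J = 0"
  unfolding hodge_def using assms by simp

lemma elem_form_eval:
  "elem_form I L = (if distinct I \<and> sort L = sort I then (-1) ^ (inv_count L + inv_count I) else 0)"
proof -
  have "mset L = mset I \<longleftrightarrow> sort L = sort I"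
    by (metis mset_sort sort_mset_eq)
  then show ?thesis unfolding elem_form_def by simp
qed

lemma sum_idx: "(\<Sum>m\<in>idx. f m) = f 1 + f 2 + f 3 + f 4 + f 5 + f 6 + f 7"
  unfolding idx_eq by (simp add: add_ac)

lemma Ff_eval: "Ff c \<omega> x y R = (\<Sum>m\<in>idx. if c x y m = 0 then 0 else c x y m * \<omega> (m # R))"
  unfolding Ff_def by (rule sum.cong) auto

lemmas eval_simps = ext_d_Gr Ff_eval sum_idx g_sc_def ub_g_def A_g_def phi_def elem_form_eval upt_rec

lemmas eval_simps2 = ext_d_Gr Ff_def sum_idx g_sc_def ub_g_def A_g_def phi_def elem_form_eval upt_rec

lemma antisym_g: "antisym_c (g_sc s)"
  unfolding antisym_c_def g_sc_def by simp

lemma alt_phi: "alt_form phi" by (rule AA_alt[OF AA_phi])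

definition psiE :: form where
  "psiE L = elem_form [1,2,3,4] L + elem_form [1,2,5,6] L + elem_form [1,3,6,7] L
    + elem_form [1,4,5,7] L + elem_form [2,3,5,7] L - elem_form [2,4,6,7] L + elem_form [3,4,5,6] L"

lemma AA_psiE: "AA psiE"
  unfolding psiE_def[abs_def] by (intro AA_add AA_diff AA_elem_form)

lemma ssl4: "\<forall>L\<in>set (ssl 1 4). levi (filter (\<lambda>x. x \<notin> set L) [1..<8] @ L) * phi (filter (\<lambda>x. x \<notin> set L) [1..<8]) = psiE L"
  by (simp add: eval_simps levi_def psiE_def numeral_eq_Suc)

lemma alt_hodge: "alt_form (hodge \<omega>)" by (rule AA_alt[OF AA_hodge])

lemma psi_eq: "set L \<subseteq> idx \<Longrightarrow> length L = 4 \<Longrightarrow> hodge phi L = psiE L"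
proof (rule alt_eq[OF alt_hodge AA_alt[OF AA_psiE]])
  fix L :: "nat list" assume L: "sorted L" "distinct L" "set L \<subseteq> idx" "length L = 4"
  then have "L \<in> set (ssl 1 4)" by (rule sorted_enum)
  then show "hodge phi L = psiE L"
    using ssl4 hodge_reduce[OF alt_phi L(2,3)] by simp
qed

lemma ssl4_dphi: "\<forall>L\<in>set (ssl 1 4). ext_d (g_sc s) phi L = 0"
  by (simp add: eval_simps numeral_eq_Suc)

lemma dphi_zero: "set L \<subseteq> idx \<Longrightarrow> length L = 4 \<Longrightarrow> ext_d (g_sc s) phi L = 0"
proof (rule alt_eq[OF AA_alt[OF AA_ext_d[OF AA_phi antisym_g]] AA_alt[OF AA_zero]])
  fix L :: "nat list" assume L: "sorted L" "distinct L" "set L \<subseteq> idx" "length L = 4"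
  then have "L \<in> set (ssl 1 4)" by (rule sorted_enum)
  then show "ext_d (g_sc s) phi L = 0"
    using ssl4_dphi by simp
qed

lemma I0_props:
  assumes "distinct J" "set J \<subseteq> idx"
  shows "set (filter (\<lambda>x. x \<notin> set J) [1..<8]) \<subseteq> idx"
    "length (filter (\<lambda>x. x \<notin> set J) [1..<8]) = 7 - length J"
proof -
  let ?I = "filter (\<lambda>x. x \<notin> set J) [1..<8]"
  have s: "set ?I = idx - set J" unfolding idx_def by auto
  then show "set ?I \<subseteq> idx" by auto
  have "length ?I = card (set ?I)" by (simp add: distinct_card[symmetric])
  also have "\<dots> = card idx - card (set J)" unfolding s using assms(2) by (simp add: card_Diff_subset idx_def)
  also have "\<dots> = 7 - length J" using assms(1) by (simp add: distinct_card idx_def)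
  finally show "length ?I = 7 - length J" .
qed

lemma AA_codiff: "AA (codiff c \<omega>)"
  using AA_hodge[of "ext_d c (hodge \<omega>)"] unfolding AA_def codiff_def[abs_def] by simp

definition betaE :: "real \<Rightarrow> form" where
  "betaE s L = (5/4 - 2 * s) * elem_form [1,2] L + (5/4 + 2 * s) * elem_form [3,4] L - 5/2 * elem_form [5,6] L"

lemma AA_betaE: "AA (betaE s)"
  unfolding betaE_def[abs_def] by (intro AA_add AA_diff AA_scale AA_elem_form)

lemma codiff_phi_red:
  assumes "distinct L" "set L \<subseteq> idx" "length L = 2"
  shows "codiff (g_sc s) phi L = - (levi (filter (\<lambda>x. x \<notin> set L) [1..<8] @ L)
           * ext_d (g_sc s) psiE (filter (\<lambda>x. x \<notin> set L) [1..<8]))"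
proof -
  let ?I = "filter (\<lambda>x. x \<notin> set L) [1..<8]"
  have alt1: "alt_form (ext_d (g_sc s) (hodge phi))"
    by (rule AA_alt[OF AA_ext_d[OF AA_hodge antisym_g]])
  have "ext_d (g_sc s) (hodge phi) ?I = ext_d (g_sc s) psiE ?I"
    using I0_props[OF assms(1,2)] assms(3) by (intro ext_d_cong psi_eq) auto
  then show ?thesis
    unfolding codiff_def using hodge_reduce[OF alt1 assms(1,2)] assms(3) by simp
qed

lemma ssl2_beta: "\<forall>L\<in>set (ssl 1 2). - (levi (filter (\<lambda>x. x \<notin> set L) [1..<8] @ L)
           * ext_d (g_sc s) psiE (filter (\<lambda>x. x \<notin> set L) [1..<8])) = betaE s L"
  by (simp add: eval_simps numeral_eq_Suc levi_def psiE_def betaE_def)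

lemma beta_eq: "set L \<subseteq> idx \<Longrightarrow> length L = 2 \<Longrightarrow> codiff (g_sc s) phi L = betaE s L"
proof (rule alt_eq[OF AA_alt[OF AA_codiff] AA_alt[OF AA_betaE]])
  fix L :: "nat list" assume L: "sorted L" "distinct L" "set L \<subseteq> idx" "length L = 2"
  then have "L \<in> set (ssl 1 2)" by (rule sorted_enum)
  then show "codiff (g_sc s) phi L = betaE s L"
    using ssl2_beta codiff_phi_red[OF L(2-4)] by simp
qed

definition dd :: "real \<Rightarrow> nat \<Rightarrow> real" where "dd s k = D_s s k k"

definition rhsF :: "real \<Rightarrow> form" where
  "rhsF s L = (c_s s + sum_list (map (dd s) L)) * phi L"

lemma sum_list_map_image: "sum_list (map f xs) = sum_mset (image_mset f (mset xs))"
  by (induct xs) auto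

lemma sum_list_map_mset: "mset xs = mset ys \<Longrightarrow> sum_list (map (f::nat\<Rightarrow>real) xs) = sum_list (map f ys)"
  unfolding sum_list_map_image by simp

lemma AA_rhsF: "AA (rhsF s)"
  unfolding AA_def rhsF_def
proof (intro allI impI)
  fix L :: "nat list" and p assume p: "Suc p < length L"
  have "sum_list (map (dd s) (swapadj p L)) = sum_list (map (dd s) L)"
    using p by (intro sum_list_map_mset) simp
  moreover have "phi (swapadj p L) = - phi L" using AA_phi p unfolding AA_def by blast
  ultimately show "(c_s s + sum_list (map (dd s) (swapadj p L))) * phi (swapadj p L) =
         - ((c_s s + sum_list (map (dd s) L)) * phi L)" by simp
qed

lemma D_s_diag: "D_s s m k = (if m = k then dd s k else 0)"
  by (simp add: D_s_def dd_def)

lemma sum_list_nth: "sum_list (map f L) = (\<Sum>p<length L. f (L ! p))"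
  by (induct L) (simp_all add: sum.lessThan_Suc_shift del: sum.lessThan_Suc)

lemma lie_D: "set L \<subseteq> idx \<Longrightarrow> lie_deriv_der (D_s s) \<omega> L = sum_list (map (dd s) L) * \<omega> L"
proof -
  assume L: "set L \<subseteq> idx"
  have "(\<Sum>m\<in>idx. D_s s m (L ! p) * \<omega> (L[p := m])) = dd s (L ! p) * \<omega> L" if p: "p < length L" for p
  proof -
    have i: "L ! p \<in> idx" using L p by auto
    have "(\<Sum>m\<in>idx. D_s s m (L ! p) * \<omega> (L[p := m])) = (\<Sum>m\<in>idx. if m = L ! p then dd s (L ! p) * \<omega> L else 0)"
      by (rule sum.cong) (simp_all add: D_s_diag)
    also have "\<dots> = dd s (L ! p) * \<omega> L" using i finite_lists_of by (simp add: idx_def)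
    finally show ?thesis .
  qed
  then have "lie_deriv_der (D_s s) \<omega> L = (\<Sum>p<length L. dd s (L ! p) * \<omega> L)"
    unfolding lie_deriv_der_def by (intro sum.cong) auto
  also have "\<dots> = sum_list (map (dd s) L) * \<omega> L"
    by (simp add: sum_distrib_right sum_list_nth)
  finally show ?thesis .
qed

lemma ssl3_final: "\<forall>L\<in>set (ssl 1 3). ext_d (g_sc s) (betaE s) L = rhsF s L"
  apply (simp add: eval_simps2 numeral_eq_Suc betaE_def rhsF_def dd_def D_s_def c_s_def)
  apply (simp add: field_simps)
  done

lemma final_eq: "set L \<subseteq> idx \<Longrightarrow> length L = 3 \<Longrightarrow> ext_d (g_sc s) (betaE s) L = rhsF s L"
proof (rule alt_eq[OF AA_alt[OF AA_ext_d[OF AA_betaE antisym_g]] AA_alt[OF AA_rhsF]])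
  fix L :: "nat list" assume L: "sorted L" "distinct L" "set L \<subseteq> idx" "length L = 3"
  then have "L \<in> set (ssl 1 3)" by (rule sorted_enum)
  then show "ext_d (g_sc s) (betaE s) L = rhsF s L"
    using ssl3_final by simp
qed

lemma lap_eq:
  assumes L: "L \<in> lists_of 3"
  shows "hodge_laplacian (g_sc s) phi L = c_s s * phi L + lie_deriv_der (D_s s) phi L"
proof -
  let ?c = "g_sc s"
  have sL: "set L \<subseteq> idx" "length L = 3" using L unfolding lists_of_def by auto
  have t1: "ext_d ?c (codiff ?c phi) L = ext_d ?c (betaE s) L"
    using sL by (intro ext_d_cong beta_eq) auto
  have h0: "hodge (ext_d ?c phi) Y = 0" if "length Y = 3" for Y
    using that by (intro hodge_zero dphi_zero) (auto simp: lists_of_def)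
  have e0: "ext_d ?c (hodge (ext_d ?c phi)) X = 0" if "X \<in> lists_of 4" for X
  proof -
    have "ext_d ?c (hodge (ext_d ?c phi)) X = ext_d ?c (\<lambda>_. 0) X"
      using that h0 by (intro ext_d_cong) (auto simp: lists_of_def)
    then show ?thesis by (simp add: ext_d_zero)
  qed
  have t2: "codiff ?c (ext_d ?c phi) L = 0"
  proof -
    have "hodge (ext_d ?c (hodge (ext_d ?c phi))) L = 0"
      by (rule hodge_zero) (use e0 sL in simp)
    then show ?thesis unfolding codiff_def by simp
  qed
  show ?thesis
    unfolding hodge_laplacian_def t1 t2 using final_eq[OF sL] lie_D[OF sL(1)]
    by (simp add: rhsF_def algebra_simps)
qed

lemma sum_diag1: "n \<in> idx \<Longrightarrow> (\<Sum>m\<in>idx. f m * D_s s n m) = f n * dd s n"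
proof -
  assume n: "n \<in> idx"
  have "(\<Sum>m\<in>idx. f m * D_s s n m) = (\<Sum>m\<in>idx. if m = n then f n * dd s n else 0)"
    by (rule sum.cong) (auto simp: D_s_diag)
  then show ?thesis using n finite_lists_of by (simp add: idx_def)
qed

lemma sum_diag2: "a \<in> idx \<Longrightarrow> (\<Sum>m\<in>idx. D_s s m a * f m) = dd s a * f a"
proof -
  assume n: "a \<in> idx"
  have "(\<Sum>m\<in>idx. D_s s m a * f m) = (\<Sum>m\<in>idx. if m = a then dd s a * f a else 0)"
    by (rule sum.cong) (auto simp: D_s_diag)
  then show ?thesis using n by (simp add: idx_def)
qed

lemma deriv_check: "\<forall>a\<in>set [1,2,3,4,5,6,7]. \<forall>b\<in>set [1,2,3,4,5,6,7]. \<forall>n\<in>set [1,2,3,4,5,6,7].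
   g_sc s a b n * dd s n = dd s a * g_sc s a b n + dd s b * g_sc s a b n"
  by (simp add: g_sc_def ub_g_def A_g_def dd_def D_s_def field_simps)

lemma deriv_g: "is_derivation (g_sc s) (D_s s)"
  unfolding is_derivation_def
proof (intro ballI)
  fix a b n assume abn: "a \<in> idx" "b \<in> idx" "n \<in> idx"
  then have "g_sc s a b n * dd s n = dd s a * g_sc s a b n + dd s b * g_sc s a b n"
    using deriv_check[of s] unfolding idx_eq by blast
  then show "(\<Sum>m\<in>idx. g_sc s a b m * D_s s n m) =
         (\<Sum>m\<in>idx. D_s s m a * g_sc s m b n) + (\<Sum>m\<in>idx. D_s s m b * g_sc s a m n)"
    using abn by (simp add: sum_diag1 sum_diag2)
qed

lemma part_i: "laplacian_soliton (g_sc s) phi (c_s s) (D_s s)"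
  unfolding laplacian_soliton_def using deriv_g lap_eq by blast

lemmas ric_simps = ric_def riem_def lc_conn_def sum_idx g_sc_def ub_g_def A_g_def

lemma ric11: "ric (g_sc s) 1 1 = -25/16 - 3/2 * s"
  by (simp add: ric_simps field_simps)
lemma ric33: "ric (g_sc s) 3 3 = -25/16 + 3/2 * s"
  by (simp add: ric_simps field_simps)
lemma ric66: "ric (g_sc s) 6 6 = -5/8"
  by (simp add: ric_simps field_simps)
lemma ric77: "ric (g_sc s) 7 7 = -15/16 - 4 * s^2"
  by (simp add: ric_simps field_simps power2_eq_square)

lemma der755: "is_derivation c D \<Longrightarrow> (\<Sum>m\<in>idx. c 7 5 m * D 5 m) = (\<Sum>m\<in>idx. D m 7 * c m 5 5) + (\<Sum>m\<in>idx. D m 5 * c 7 m 5)"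
  unfolding is_derivation_def idx_def by simp

lemma der136: "is_derivation c D \<Longrightarrow> (\<Sum>m\<in>idx. c 1 3 m * D 6 m) = (\<Sum>m\<in>idx. D m 1 * c m 3 6) + (\<Sum>m\<in>idx. D m 3 * c 1 m 6)"
  unfolding is_derivation_def idx_def by simp

lemma ricci_fwd:
  assumes s: "s \<ge> 0" and rs: "ricci_soliton (g_sc s) lam D"
  shows "s = 5/8"
proof -
  have der: "is_derivation (g_sc s) D" and R: "\<forall>b\<in>idx. \<forall>k\<in>idx. ric (g_sc s) b k = lam * (if b = k then 1 else 0) + D k b"
    using rs unfolding ricci_soliton_def by auto
  have d1: "D 1 1 = ric (g_sc s) 1 1 - lam" using R by (simp add: idx_def)
  have d3: "D 3 3 = ric (g_sc s) 3 3 - lam" using R by (simp add: idx_def)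
  have d6: "D 6 6 = ric (g_sc s) 6 6 - lam" using R by (simp add: idx_def)
  have d7: "D 7 7 = ric (g_sc s) 7 7 - lam" using R by (simp add: idx_def)
  have e1: "D 7 7 = 0"
    using der755[OF der] by (simp add: sum_idx g_sc_def ub_g_def A_g_def)
  have e2: "D 6 6 = D 1 1 + D 3 3"
    using der136[OF der] by (simp add: sum_idx g_sc_def ub_g_def A_g_def)
  have "s^2 = (5/8)^2"
    using e1 e2 unfolding d1 d3 d6 d7 ric11 ric33 ric66 ric77 by (simp add: power2_eq_square)
  then show ?thesis using s by (simp add: power2_eq_iff_nonneg)
qed

definition rr :: "nat \<Rightarrow> real" where
  "rr k = (if k = 1 then -5/2 else if k = 2 then -5/4 else if k = 3 then -5/8 else if k = 4 then 5/8
           else if k = 5 then 5/8 else if k = 6 then -5/8 else -5/2)"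

lemma ric_full: "\<forall>b\<in>set [1,2,3,4,5,6,7]. \<forall>k\<in>set [1,2,3,4,5,6,7].
   ric (g_sc (5/8)) b k = (if b = k then rr b else 0)"
  by (simp add: ric_simps rr_def)

lemma deriv_diag:
  assumes "\<forall>a\<in>idx. \<forall>b\<in>idx. \<forall>n\<in>idx. c a b n * f n = f a * c a b n + f b * c a b n"
  shows "is_derivation c (\<lambda>m k. if m = k then f k else 0)"
  unfolding is_derivation_def
proof (intro ballI)
  fix a b n assume abn: "a \<in> idx" "b \<in> idx" "n \<in> idx"
  have s1: "(\<Sum>m\<in>idx. c a b m * (if n = m then f m else 0)) = c a b n * f n"
  proof -
    have "(\<Sum>m\<in>idx. c a b m * (if n = m then f m else 0)) = (\<Sum>m\<in>idx. if m = n then c a b n * f n else 0)"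
      by (rule sum.cong) auto
    then show ?thesis using abn by (simp add: idx_def)
  qed
  have s2: "(\<Sum>m\<in>idx. (if m = a then f a else 0) * c m b n) = f a * c a b n"
  proof -
    have "(\<Sum>m\<in>idx. (if m = a then f a else 0) * c m b n) = (\<Sum>m\<in>idx. if m = a then f a * c a b n else 0)"
      by (rule sum.cong) auto
    then show ?thesis using abn by (simp add: idx_def)
  qed
  have s3: "(\<Sum>m\<in>idx. (if m = b then f b else 0) * c a m n) = f b * c a b n"
  proof -
    have "(\<Sum>m\<in>idx. (if m = b then f b else 0) * c a m n) = (\<Sum>m\<in>idx. if m = b then f b * c a b n else 0)"
      by (rule sum.cong) auto
    then show ?thesis using abn by (simp add: idx_def)
  qed
  show "(\<Sum>m\<in>idx. c a b m * (if n = m then f m else 0)) =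
        (\<Sum>m\<in>idx. (if m = a then f a else 0) * c m b n) + (\<Sum>m\<in>idx. (if m = b then f b else 0) * c a m n)"
    unfolding s1 s2 s3 using assms abn by blast
qed

lemma deriv_R_check: "\<forall>a\<in>set [1,2,3,4,5,6,7]. \<forall>b\<in>set [1,2,3,4,5,6,7]. \<forall>n\<in>set [1,2,3,4,5,6,7].
   g_sc (5/8) a b n * (rr n + 5/2) = (rr a + 5/2) * g_sc (5/8) a b n + (rr b + 5/2) * g_sc (5/8) a b n"
  by (simp add: g_sc_def ub_g_def A_g_def rr_def)

lemma ricci_bwd: "ricci_soliton (g_sc (5/8)) (-5/2) (\<lambda>m k. if m = k then rr k + 5/2 else 0)"
  unfolding ricci_soliton_def
proof
  show "is_derivation (g_sc (5/8)) (\<lambda>m k. if m = k then rr k + 5/2 else 0)"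
    by (rule deriv_diag) (unfold idx_eq, rule deriv_R_check)
  show "\<forall>b\<in>idx. \<forall>k\<in>idx. ric (g_sc (5/8)) b k = -5/2 * (if b = k then 1 else 0) + (if k = b then rr b + 5/2 else 0)"
    proof (intro ballI)
    fix b k assume "b \<in> idx" "k \<in> idx"
    then have "ric (g_sc (5/8)) b k = (if b = k then rr b else 0)"
      using ric_full unfolding idx_eq by blast
    then show "ric (g_sc (5/8)) b k = -5/2 * (if b = k then 1 else 0) + (if k = b then rr b + 5/2 else 0)"
      by auto
  qed
qed

lemma part_ii: "s \<ge> 0 \<Longrightarrow> expanding_ricci_soliton (g_sc s) \<longleftrightarrow> s = 5/8"
proof
  assume "s \<ge> 0" "expanding_ricci_soliton (g_sc s)"
  then obtain lam D where "ricci_soliton (g_sc s) lam D" unfolding expanding_ricci_soliton_def by blast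
  then show "s = 5/8" using ricci_fwd \<open>s \<ge> 0\<close> by blast
next
  assume "s = 5/8"
  then have "ricci_soliton (g_sc s) (-5/2) (\<lambda>m k. if m = k then rr k + 5/2 else 0)"
    by (subst \<open>s = 5/8\<close>) (rule ricci_bwd)
  then show "expanding_ricci_soliton (g_sc s)"
    unfolding expanding_ricci_soliton_def by (intro exI[of _ "-5/2"]) auto
qed

lemma delta_sum: "k \<in> idx \<Longrightarrow> (\<Sum>q\<in>idx. f q * (if q = k then 1 else 0)) = (f k :: real)"
  by (simp add: idx_def if_distrib cong: if_cong)

lemma rot3: "(\<Sum>a\<in>A. \<Sum>b\<in>B. \<Sum>c\<in>C. f a b c) = (\<Sum>b\<in>B. \<Sum>c\<in>C. \<Sum>a\<in>A. (f a b c :: real))"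
proof -
  have "(\<Sum>a\<in>A. \<Sum>b\<in>B. \<Sum>c\<in>C. f a b c) = (\<Sum>b\<in>B. \<Sum>a\<in>A. \<Sum>c\<in>C. f a b c)"
    by (rule sum.swap)
  also have "\<dots> = (\<Sum>b\<in>B. \<Sum>c\<in>C. \<Sum>a\<in>A. f a b c)"
    by (rule sum.cong[OF refl], rule sum.swap)
  finally show ?thesis .
qed

lemma trace_inv:
  fixes T S :: endo
  assumes hom: "\<forall>a\<in>idx. \<forall>b\<in>idx. \<forall>n\<in>idx. (\<Sum>m\<in>idx. c1 a b m * T n m) = (\<Sum>p\<in>idx. \<Sum>q\<in>idx. T p a * T q b * c2 p q n)"
    and TS: "\<forall>a\<in>idx. \<forall>b\<in>idx. (\<Sum>m\<in>idx. T a m * S m b) = (if a = b then 1 else 0)"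
    and ST: "\<forall>a\<in>idx. \<forall>b\<in>idx. (\<Sum>m\<in>idx. S a m * T m b) = (if a = b then 1 else 0)"
    and b: "b \<in> idx"
  shows "(\<Sum>p\<in>idx. T p b * (\<Sum>n\<in>idx. c2 p n n)) = (\<Sum>k\<in>idx. c1 b k k)"
proof -
  have "(\<Sum>p\<in>idx. T p b * (\<Sum>n\<in>idx. c2 p n n))
      = (\<Sum>n\<in>idx. \<Sum>p\<in>idx. T p b * c2 p n n)"
    by (simp only: sum_distrib_left) (rule sum.swap)
  also have "\<dots> = (\<Sum>n\<in>idx. \<Sum>p\<in>idx. \<Sum>q\<in>idx. T p b * c2 p q n * (\<Sum>k\<in>idx. T q k * S k n))"
  proof (intro sum.cong refl)
    fix n p assume n: "n \<in> idx"
    have "(\<Sum>q\<in>idx. T p b * c2 p q n * (\<Sum>k\<in>idx. T q k * S k n))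
        = (\<Sum>q\<in>idx. T p b * c2 p q n * (if q = n then 1 else 0))"
      using TS n by (intro sum.cong refl) auto
    also have "\<dots> = T p b * c2 p n n" using n by (rule delta_sum)
    finally show "T p b * c2 p n n = (\<Sum>q\<in>idx. T p b * c2 p q n * (\<Sum>k\<in>idx. T q k * S k n))" by simp
  qed
  also have "\<dots> = (\<Sum>n\<in>idx. \<Sum>k\<in>idx. S k n * (\<Sum>p\<in>idx. \<Sum>q\<in>idx. T p b * T q k * c2 p q n))"
  proof (rule sum.cong[OF refl])
    fix n
    have "(\<Sum>p\<in>idx. \<Sum>q\<in>idx. T p b * c2 p q n * (\<Sum>k\<in>idx. T q k * S k n))
       = (\<Sum>p\<in>idx. \<Sum>q\<in>idx. \<Sum>k\<in>idx. S k n * (T p b * T q k * c2 p q n))"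
      by (simp only: sum_distrib_left) (simp only: mult_ac)
    also have "\<dots> = (\<Sum>k\<in>idx. \<Sum>p\<in>idx. \<Sum>q\<in>idx. S k n * (T p b * T q k * c2 p q n))"
      by (rule rot3[symmetric])
    also have "\<dots> = (\<Sum>k\<in>idx. S k n * (\<Sum>p\<in>idx. \<Sum>q\<in>idx. T p b * T q k * c2 p q n))"
      by (simp only: sum_distrib_left)
    finally show "(\<Sum>p\<in>idx. \<Sum>q\<in>idx. T p b * c2 p q n * (\<Sum>k\<in>idx. T q k * S k n))
       = (\<Sum>k\<in>idx. S k n * (\<Sum>p\<in>idx. \<Sum>q\<in>idx. T p b * T q k * c2 p q n))" .
  qed
  also have "\<dots> = (\<Sum>n\<in>idx. \<Sum>k\<in>idx. S k n * (\<Sum>m\<in>idx. c1 b k m * T n m))"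
    using hom b by (intro sum.cong refl) auto
  also have "\<dots> = (\<Sum>n\<in>idx. \<Sum>k\<in>idx. \<Sum>m\<in>idx. c1 b k m * (S k n * T n m))"
    by (simp only: sum_distrib_left) (simp only: mult_ac)
  also have "\<dots> = (\<Sum>k\<in>idx. \<Sum>m\<in>idx. \<Sum>n\<in>idx. c1 b k m * (S k n * T n m))"
    by (rule rot3)
  also have "\<dots> = (\<Sum>k\<in>idx. \<Sum>m\<in>idx. c1 b k m * (\<Sum>n\<in>idx. S k n * T n m))"
    by (simp only: sum_distrib_left)
  also have "\<dots> = (\<Sum>k\<in>idx. \<Sum>m\<in>idx. c1 b k m * (if k = m then 1 else 0))"
    using ST by (intro sum.cong refl) auto
  also have "\<dots> = (\<Sum>k\<in>idx. c1 b k k)"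
    by (intro sum.cong refl) (simp add: idx_def if_distrib cong: if_cong)
  finally show ?thesis .
qed

lemma inj_T:
  fixes T S :: endo
  assumes ST: "\<forall>a\<in>idx. \<forall>b\<in>idx. (\<Sum>m\<in>idx. S a m * T m b) = (if a = b then 1 else 0)"
    and z: "\<forall>n\<in>idx. (\<Sum>m\<in>idx. T n m * z m) = 0" and a: "a \<in> idx"
  shows "z a = 0"
proof -
  have "(\<Sum>m\<in>idx. (if a = m then 1 else 0) * z m) = (\<Sum>m\<in>idx. if m = a then z a else 0)"
    by (rule sum.cong) auto
  then have "z a = (\<Sum>m\<in>idx. (if a = m then 1 else 0) * z m)"
    using a unfolding idx_def by simp
  also have "\<dots> = (\<Sum>m\<in>idx. (\<Sum>k\<in>idx. S a k * T k m) * z m)"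
    using ST a by (intro sum.cong refl) auto
  also have "\<dots> = (\<Sum>m\<in>idx. \<Sum>k\<in>idx. S a k * (T k m * z m))"
    by (simp only: sum_distrib_right) (simp only: mult_ac)
  also have "\<dots> = (\<Sum>k\<in>idx. \<Sum>m\<in>idx. S a k * (T k m * z m))"
    by (rule sum.swap)
  also have "\<dots> = (\<Sum>k\<in>idx. S a k * (\<Sum>m\<in>idx. T k m * z m))"
    by (simp only: sum_distrib_left)
  also have "\<dots> = 0" using z by simp
  finally show ?thesis .
qed

lemma trace_s: "p \<in> idx \<Longrightarrow> (\<Sum>n\<in>idx. s_sc x p n n) = (if p = 7 then 2 else 0)"
  unfolding idx_eq by (auto simp: sum_idx[unfolded idx_eq] s_sc_def ub_s_def A_s_def field_simps)

lemma trace_g: "b \<in> idx \<Longrightarrow> (\<Sum>k\<in>idx. g_sc s b k k) = (if b = 7 then 3/2 else 0)"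
  unfolding idx_eq by (auto simp: sum_idx[unfolded idx_eq] g_sc_def ub_g_def A_g_def)

context
  fixes s x :: real and T S :: endo
  assumes hom: "\<forall>a\<in>idx. \<forall>b\<in>idx. \<forall>n\<in>idx. (\<Sum>m\<in>idx. g_sc s a b m * T n m) = (\<Sum>p\<in>idx. \<Sum>q\<in>idx. T p a * T q b * s_sc x p q n)"
    and TS: "\<forall>a\<in>idx. \<forall>b\<in>idx. (\<Sum>m\<in>idx. T a m * S m b) = (if a = b then 1 else 0)"
    and ST: "\<forall>a\<in>idx. \<forall>b\<in>idx. (\<Sum>m\<in>idx. S a m * T m b) = (if a = b then 1 else 0)"
begin

lemma T7: "b \<in> idx \<Longrightarrow> 2 * T 7 b = (if b = 7 then 3/2 else 0)"
proof -
  assume b: "b \<in> idx"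
  have "(\<Sum>p\<in>idx. T p b * (\<Sum>n\<in>idx. s_sc x p n n)) = (\<Sum>p\<in>idx. if p = 7 then 2 * T 7 b else 0)"
    by (rule sum.cong) (simp_all add: trace_s)
  also have "\<dots> = 2 * T 7 b" by (simp add: idx_def)
  finally show ?thesis using trace_inv[OF hom TS ST b] trace_g[OF b] by simp
qed

lemma T7z: "T 7 1 = 0" "T 7 2 = 0" "T 7 3 = 0" "T 7 4 = 0" "T 7 5 = 0" "T 7 6 = 0"
proof -
  have "2 * T 7 b = (if b = 7 then 3/2 else 0)" if "b \<in> {1..7}" for b using T7 that unfolding idx_def by blast
  from this[of 1] this[of 2] this[of 3] this[of 4] this[of 5] this[of 6]
  show "T 7 1 = 0" "T 7 2 = 0" "T 7 3 = 0" "T 7 4 = 0" "T 7 5 = 0" "T 7 6 = 0" by simp_all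
qed

lemma hom_at: "a \<in> idx \<Longrightarrow> b \<in> idx \<Longrightarrow> n \<in> idx \<Longrightarrow>
  (\<Sum>m\<in>idx. g_sc s a b m * T n m) = (\<Sum>p\<in>idx. \<Sum>q\<in>idx. T p a * T q b * s_sc x p q n)"
  using hom by blast

lemma in_idx: "(1::nat) \<in> idx" "(2::nat) \<in> idx" "(3::nat) \<in> idx" "(4::nat) \<in> idx"
   "(5::nat) \<in> idx" "(6::nat) \<in> idx" "(7::nat) \<in> idx"
  by (simp_all add: idx_def)

lemma comb3:
  assumes n: "n \<in> idx" and a1: "a1 \<in> idx" and a2: "a2 \<in> idx" and a4: "a4 \<in> idx" and b: "b \<in> idx"
  shows "x1 * (\<Sum>m\<in>idx. g_sc s a1 b m * T n m) + x2 * (\<Sum>m\<in>idx. g_sc s a2 b m * T n m)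
          + x4 * (\<Sum>m\<in>idx. g_sc s a4 b m * T n m)
       = (\<Sum>p\<in>idx. \<Sum>q\<in>idx. (x1 * T p a1 + x2 * T p a2 + x4 * T p a4) * T q b * s_sc x p q n)"
proof -
  have "(\<Sum>p\<in>idx. \<Sum>q\<in>idx. (x1 * T p a1 + x2 * T p a2 + x4 * T p a4) * T q b * s_sc x p q n)
     = (\<Sum>p\<in>idx. \<Sum>q\<in>idx. x1 * (T p a1 * T q b * s_sc x p q n) + x2 * (T p a2 * T q b * s_sc x p q n)
          + x4 * (T p a4 * T q b * s_sc x p q n))"
    by (intro sum.cong refl) (simp add: algebra_simps)
  also have "\<dots> = x1 * (\<Sum>p\<in>idx. \<Sum>q\<in>idx. T p a1 * T q b * s_sc x p q n)
     + x2 * (\<Sum>p\<in>idx. \<Sum>q\<in>idx. T p a2 * T q b * s_sc x p q n)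
     + x4 * (\<Sum>p\<in>idx. \<Sum>q\<in>idx. T p a4 * T q b * s_sc x p q n)"
    by (simp add: sum.distrib sum_distrib_left)
  finally show ?thesis using hom_at[OF a1 b n] hom_at[OF a2 b n] hom_at[OF a4 b n] by simp
qed

lemma key:
  assumes h: "\<forall>i\<in>{1,2,3,4,7}. x1 * T i 1 + x2 * T i 2 + x4 * T i 4 = 0"
  shows "x1 = 0 \<and> x2 = 0 \<and> x4 = 0"
proof -
  define y where "y p = x1 * T p 1 + x2 * T p 2 + x4 * T p 4" for p
  have y0: "y 1 = 0" "y 2 = 0" "y 3 = 0" "y 4 = 0" "y 7 = 0" "y (Suc 0) = 0" using h unfolding y_def by auto
  have e1: "x1 * T n 6 + x2 * T n 5 = 0" if n: "n \<in> idx" for n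
  proof -
    have "x1 * (\<Sum>m\<in>idx. g_sc s 1 3 m * T n m) + x2 * (\<Sum>m\<in>idx. g_sc s 2 3 m * T n m)
          + x4 * (\<Sum>m\<in>idx. g_sc s 4 3 m * T n m)
       = (\<Sum>p\<in>idx. \<Sum>q\<in>idx. y p * T q 3 * s_sc x p q n)"
      unfolding y_def by (rule comb3[OF n]) (simp_all add: idx_def)
    moreover have "(\<Sum>p\<in>idx. \<Sum>q\<in>idx. y p * T q 3 * s_sc x p q n) = 0"
      by (simp add: sum_idx y0 T7z s_sc_def ub_s_def)
    moreover have "(\<Sum>m\<in>idx. g_sc s 1 3 m * T n m) = - T n 6"
      by (simp add: sum_idx g_sc_def ub_g_def)
    moreover have "(\<Sum>m\<in>idx. g_sc s 2 3 m * T n m) = - T n 5"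
      by (simp add: sum_idx g_sc_def ub_g_def)
    moreover have "(\<Sum>m\<in>idx. g_sc s 4 3 m * T n m) = 0"
      by (simp add: sum_idx g_sc_def ub_g_def)
    ultimately show ?thesis by simp
  qed
  define z where "z m = (if m = (5::nat) then x2 else if m = 6 then x1 else 0)" for m
  have "\<forall>n\<in>idx. (\<Sum>m\<in>idx. T n m * z m) = 0"
    using e1 by (simp add: sum_idx z_def algebra_simps)
  then have "z 5 = 0" "z 6 = 0" using inj_T[OF ST] in_idx by blast+
  then have x12: "x1 = 0" "x2 = 0" unfolding z_def by simp_all
  have e2: "x4 * T n 5 = 0" if n: "n \<in> idx" for n
  proof -
    have "0 * (\<Sum>m\<in>idx. g_sc s 1 1 m * T n m) + 0 * (\<Sum>m\<in>idx. g_sc s 2 1 m * T n m)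
          + x4 * (\<Sum>m\<in>idx. g_sc s 4 1 m * T n m)
       = (\<Sum>p\<in>idx. \<Sum>q\<in>idx. (0 * T p 1 + 0 * T p 2 + x4 * T p 4) * T q 1 * s_sc x p q n)"
      by (rule comb3[OF n]) (simp_all add: idx_def)
    moreover have "(\<Sum>p\<in>idx. \<Sum>q\<in>idx. (0 * T p 1 + 0 * T p 2 + x4 * T p 4) * T q 1 * s_sc x p q n) = 0"
    proof -
      have w0: "x4 * T 1 4 = 0" "x4 * T (Suc 0) 4 = 0" "x4 * T 2 4 = 0" "x4 * T 3 4 = 0"
        "x4 * T 4 4 = 0" "x4 * T 7 4 = 0"
        using y0 unfolding y_def x12 by simp_all
      have t: "T 7 (Suc 0) = 0" using T7z(1) by simp
      show ?thesis by (simp add: sum_idx T7z t w0 s_sc_def ub_s_def)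
    qed
    moreover have "(\<Sum>m\<in>idx. g_sc s 4 1 m * T n m) = T n 5"
      by (simp add: sum_idx g_sc_def ub_g_def)
    ultimately show ?thesis by simp
  qed
  define z' where "z' m = (if m = (5::nat) then x4 else 0)" for m
  have "\<forall>n\<in>idx. (\<Sum>m\<in>idx. T n m * z' m) = 0"
    using e2 by (simp add: sum_idx z'_def algebra_simps)
  then have "z' 5 = 0" using inj_T[OF ST] in_idx by blast
  then have "x4 = 0" unfolding z'_def by simp
  with x12 show ?thesis by simp
qed

lemma no_iso: False
proof -
  have t: "T 7 (Suc 0) = 0" using T7z(1) by simp
  define u1 u2 u3 u4 where "u1 = T 1 2" "u2 = T 2 2" "u3 = T 3 2" "u4 = T 4 2"
  define p1 p2 p3 p4 where "p1 = T 1 1" "p2 = T 2 1" "p3 = T 3 1" "p4 = T 4 1"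
  define q1 q2 q3 q4 where "q1 = T 1 4" "q2 = T 2 4" "q3 = T 3 4" "q4 = T 4 4"
  have E1: "- u1 * p4 + u4 * p1 - u2 * p3 + u3 * p2 = 0"
    using hom_at[OF in_idx(2) in_idx(1) in_idx(5)] unfolding u1_u2_u3_u4_def p1_p2_p3_p4_def
    by (simp add: sum_idx g_sc_def ub_g_def s_sc_def ub_s_def T7z t algebra_simps)
  have E2: "- u1 * p3 + u3 * p1 + u2 * p4 - u4 * p2 = 0"
    using hom_at[OF in_idx(2) in_idx(1) in_idx(6)] unfolding u1_u2_u3_u4_def p1_p2_p3_p4_def
    by (simp add: sum_idx g_sc_def ub_g_def s_sc_def ub_s_def T7z t algebra_simps)
  have E3: "- u1 * q4 + u4 * q1 - u2 * q3 + u3 * q2 = 0"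
    using hom_at[OF in_idx(2) in_idx(4) in_idx(5)] unfolding u1_u2_u3_u4_def q1_q2_q3_q4_def
    by (simp add: sum_idx g_sc_def ub_g_def s_sc_def ub_s_def T7z t algebra_simps)
  have E4: "- u1 * q3 + u3 * q1 + u2 * q4 - u4 * q2 = 0"
    using hom_at[OF in_idx(2) in_idx(4) in_idx(6)] unfolding u1_u2_u3_u4_def q1_q2_q3_q4_def
    by (simp add: sum_idx g_sc_def ub_g_def s_sc_def ub_s_def T7z t algebra_simps)
  define N where "N = u1^2 + u2^2 + u3^2 + u4^2"
  define \<alpha> where "\<alpha> = u1 * p1 + u2 * p2 + u3 * p3 + u4 * p4"
  define \<beta> where "\<beta> = u2 * p1 - u1 * p2 + u4 * p3 - u3 * p4"
  define \<gamma> where "\<gamma> = u1 * q1 + u2 * q2 + u3 * q3 + u4 * q4"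
  define \<delta> where "\<delta> = u2 * q1 - u1 * q2 + u4 * q3 - u3 * q4"
  have P: "N * p1 = \<alpha> * u1 + \<beta> * u2" "N * p2 = \<alpha> * u2 - \<beta> * u1"
          "N * p3 = \<alpha> * u3 + \<beta> * u4" "N * p4 = \<alpha> * u4 - \<beta> * u3"
    using E1 E2 unfolding N_def \<alpha>_def \<beta>_def by algebra+
  have Q: "N * q1 = \<gamma> * u1 + \<delta> * u2" "N * q2 = \<gamma> * u2 - \<delta> * u1"
          "N * q3 = \<gamma> * u3 + \<delta> * u4" "N * q4 = \<gamma> * u4 - \<delta> * u3"
    using E3 E4 unfolding N_def \<gamma>_def \<delta>_def by algebra+
  have "\<forall>i\<in>{1,2,3,4,7}. (\<delta> * N) * T i 1 + (- (\<alpha> * \<delta> - \<beta> * \<gamma>)) * T i 2 + (- (\<beta> * N)) * T i 4 = 0"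
  proof -
    have "(\<delta> * N) * p + (- (\<alpha> * \<delta> - \<beta> * \<gamma>)) * u + (- (\<beta> * N)) * q = 0"
      if "N * p = \<alpha> * u + \<beta> * v" "N * q = \<gamma> * u + \<delta> * v" for p u q v
      using that by algebra
    from this[OF P(1) Q(1)] this[OF P(3) Q(3)] this[of p2 u2 "- u1" q2] this[of p4 u4 "- u3" q4] P Q
    show ?thesis unfolding u1_u2_u3_u4_def p1_p2_p3_p4_def q1_q2_q3_q4_def
      by (simp add: T7z t)
  qed
  from key[OF this] have k1: "\<delta> * N = 0" "\<alpha> * \<delta> - \<beta> * \<gamma> = 0" "\<beta> * N = 0" by simp_all
  show False
  proof (cases "N = 0")
    case True
    then have "u1 = 0 \<and> u2 = 0 \<and> u3 = 0 \<and> u4 = 0" unfolding N_def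
      by (smt (verit) zero_le_power2 power2_eq_square mult_eq_0_iff)
    then have "\<forall>i\<in>{1,2,3,4,7}. 0 * T i 1 + 1 * T i 2 + 0 * T i 4 = 0"
      unfolding u1_u2_u3_u4_def by (simp add: T7z)
    from key[OF this] show False by simp
  next
    case False
    with k1 have b0: "\<beta> = 0" by simp
    have "\<forall>i\<in>{1,2,3,4,7}. N * T i 1 + (- \<alpha>) * T i 2 + 0 * T i 4 = 0"
      using P b0 unfolding u1_u2_u3_u4_def p1_p2_p3_p4_def by (simp add: T7z t)
    from key[OF this] False show False by simp
  qed
qed

end

lemma part_iii: "\<not> lie_isomorphic (g_sc s) (s_sc x)"
proof
  assume "lie_isomorphic (g_sc s) (s_sc x)"
  then obtain T S where
    inv: "\<forall>a\<in>idx. \<forall>b\<in>idx. (\<Sum>m\<in>idx. S a m * T m b) = (if a = b then 1 else 0)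
                        \<and> (\<Sum>m\<in>idx. T a m * S m b) = (if a = b then 1 else 0)"
    and hom: "\<forall>a\<in>idx. \<forall>b\<in>idx. \<forall>n\<in>idx.
        (\<Sum>m\<in>idx. g_sc s a b m * T n m) = (\<Sum>p\<in>idx. \<Sum>q\<in>idx. T p a * T q b * s_sc x p q n)"
    unfolding lie_isomorphic_def lie_iso_def by blast
  show False
    by (rule no_iso[OF hom, of S]) (use inv in blast)+
qed

lemma cs_signs:
  assumes s: "s \<ge> (0::real)"
  shows "(s < sqrt 15 / 8 \<longrightarrow> c_s s < 0) \<and> (s = sqrt 15 / 8 \<longrightarrow> c_s s = 0)
         \<and> (s > sqrt 15 / 8 \<longrightarrow> c_s s > 0)"
proof (intro conjI impI)
  have sq: "(sqrt 15)^2 = (15::real)" by simp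
  have s8: "0 \<le> 8 * s" using s by simp
  {
    assume "s < sqrt 15 / 8"
    then have "8 * s < sqrt 15" by simp
    then have "(8 * s)^2 < (sqrt 15)^2" using s8 by (intro power_strict_mono) auto
    then show "c_s s < 0" unfolding c_s_def sq by (simp add: power_mult_distrib)
  }
  {
    assume "s = sqrt 15 / 8"
    then have "8 * s = sqrt 15" by simp
    then have "(8 * s)^2 = 15" using sq by simp
    then have "s^2 = 15/64" by (simp add: power_mult_distrib)
    then show "c_s s = 0" unfolding c_s_def by simp
  }
  {
    assume "s > sqrt 15 / 8"
    then have "sqrt 15 < 8 * s" by simp
    then have "(sqrt 15)^2 < (8 * s)^2" by (intro power_strict_mono) auto
    then show "c_s s > 0" unfolding c_s_def sq by (simp add: power_mult_distrib)
  }
qed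

theorem theorem4p9:
  shows "(\<forall>s::real. s \<ge> 0 \<longrightarrow>
            laplacian_soliton (g_sc s) phi (c_s s) (D_s s)
          \<and> (s < sqrt 15 / 8 \<longrightarrow> c_s s < 0)
          \<and> (s = sqrt 15 / 8 \<longrightarrow> c_s s = 0)
          \<and> (s > sqrt 15 / 8 \<longrightarrow> c_s s > 0)
          \<and> (expanding_ricci_soliton (g_sc s) \<longleftrightarrow> s = 5/8))
       \<and> (\<forall>a s::real. \<not> lie_isomorphic (g_sc s) (s_sc a))"
  using part_i cs_signs part_ii part_iii by blast

end
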